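(* Let $C$ be a field of characteristic zero, $L\in C[x][\partial]$ of order $r_L$, and $P\in C[x,y]$ with $\deg_yP=r_P$, square-free in $C(x)[y]$ and without non-constant divisors in $\bar C[y]$. Let $f_1,\dots,f_{r_L}$ be $C$-linearly independent solutions of $L$, $g_1,\dots,g_{r_P}$ distinct solutions of $P$, $V$ the $C$-span of all $f_i\circ g_j$, and $r=\dim_CV$. Let $A(x,y)\in C[x,y]^{(r+1)\times r_L}$ be a matrix such that $f\in V$ if and only if $(f,f',\dots,f^{(r)})^T$ lies in the column space of $\begin{pmatrix}A(x,g_1)&\cdots&A(x,g_{r_P})\end{pmatrix}$. Then there exists a matrix $B(y)\in C[y]^{(r_Lr_P-r)\times r_L}$ whose entries have degree at most $r_P-1$ such that the $(r_Lr_P+1)\times r_Lr_P$ matrix \[ \begin{pmatrix}A(x,g_1)&\cdots&A(x,g_{r_P})\\ B(g_1)&\cdots&B(g_{r_P})\end{pmatrix} \] has rank $r_Lr_P$.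
   Context: All functions $g_j$, $f_i\circ g_j$ and $f$ are regarded as elements of a common differential field $K\supseteq C(x)$ (derivation extending $d/dx$) whose field of constants is $C$; e.g. for $C=\mathbb C$, meromorphic functions on a connected open set where they are all analytic. Column spaces and ranks are taken over $K$. A solution $g$ of $P$ satisfies $P(x,g(x))=0$; a solution $f$ of $L$ satisfies $L(f)=0$. *)

theory Defs
  imports "HOL-Computational_Algebra.Polynomial" "HOL-Computational_Algebra.Fraction_Field"
    "HOL-Computational_Algebra.Squarefree" "HOL-Algebra.Algebraic_Closure_Type"
    "Jordan_Normal_Form.DL_Rank"
begin

text \<open>C is embedded in the differential field K via the ring embedding emb.
  A family v_0,...,v_(n-1) of elements of K is C-linearly independent.\<close>
definition c_lin_indep :: "('c::field \<Rightarrow> 'a::field) \<Rightarrow> (nat \<Rightarrow> 'a) \<Rightarrow> nat \<Rightarrow> bool" where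
  "c_lin_indep emb v n \<longleftrightarrow>
     (\<forall>c::nat \<Rightarrow> 'c. (\<Sum>i<n. emb (c i) * v i) = 0 \<longrightarrow> (\<forall>i<n. c i = 0))"

definition c_span :: "('c::field \<Rightarrow> 'a::field) \<Rightarrow> (nat \<Rightarrow> 'a) \<Rightarrow> nat \<Rightarrow> 'a set" where
  "c_span emb v n = {(\<Sum>i<n. emb (c i) * v i) | c :: nat \<Rightarrow> 'c. True}"

definition eval_x :: "('c::field \<Rightarrow> 'a::field) \<Rightarrow> 'a \<Rightarrow> 'c poly \<Rightarrow> 'a" where
  "eval_x emb xx p = poly (map_poly emb p) xx"

text \<open>Elements of C[x,y] are represented as 'c poly poly = (C[x])[y], the outer variable being y.
  Evaluate P(x, y) at x := xx, y := yy.\<close>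
definition eval_xy :: "('c::field \<Rightarrow> 'a::field) \<Rightarrow> 'a \<Rightarrow> 'c poly poly \<Rightarrow> 'a \<Rightarrow> 'a" where
  "eval_xy emb xx p yy = poly (map_poly (eval_x emb xx) p) yy"

definition eval_y :: "('c::field \<Rightarrow> 'a::field) \<Rightarrow> 'c poly \<Rightarrow> 'a \<Rightarrow> 'a" where
  "eval_y emb b yy = poly (map_poly emb b) yy"

end

theory Submission
  imports Defs
begin


definition indepf :: "nat \<Rightarrow> nat set \<Rightarrow> (nat \<Rightarrow> nat \<Rightarrow> 'a::field) \<Rightarrow> bool" where
  "indepf n I v \<longleftrightarrow> (\<forall>\<alpha>. (\<forall>c<n. (\<Sum>i\<in>I. \<alpha> i * v i c) = 0) \<longrightarrow> (\<forall>i\<in>I. \<alpha> i = 0))"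

lemma indepf_card: "finite I \<Longrightarrow> indepf n I v \<Longrightarrow> card I \<le> n"
proof (induction n arbitrary: I v)
  case 0
  have "\<forall>i\<in>I. (1::'a) = 0" using spec[OF 0(2)[unfolded indepf_def], of "\<lambda>_. 1"] by simp
  then have "I = {}" by auto
  then show ?case by simp
next
  case (Suc n)
  show ?case
  proof (cases "\<forall>i\<in>I. v i n = 0")
    case True
    have "indepf n I v" unfolding indepf_def
    proof (intro allI impI)
      fix \<alpha> :: "nat \<Rightarrow> 'a" assume h: "\<forall>c<n. (\<Sum>i\<in>I. \<alpha> i * v i c) = 0"
      have "\<forall>c<Suc n. (\<Sum>i\<in>I. \<alpha> i * v i c) = 0"
        using h True by (auto simp: less_Suc_eq)
      then show "\<forall>i\<in>I. \<alpha> i = 0" using Suc.prems unfolding indepf_def by blast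
    qed
    then show ?thesis using Suc by fastforce
  next
    case False
    then obtain i0 where i0: "i0 \<in> I" "v i0 n \<noteq> 0" by blast
    define w where "w i c = v i c - (v i n / v i0 n) * v i0 c" for i c
    have "indepf n (I - {i0}) w" unfolding indepf_def
    proof (intro allI impI)
      fix \<alpha> :: "nat \<Rightarrow> 'a" assume h: "\<forall>c<n. (\<Sum>i\<in>I - {i0}. \<alpha> i * w i c) = 0"
      define s where "s = (\<Sum>i\<in>I - {i0}. \<alpha> i * v i n)"
      define \<beta> where "\<beta> i = (if i = i0 then - s / v i0 n else \<alpha> i)" for i
      have key: "(\<Sum>i\<in>I. \<beta> i * v i c) = (\<Sum>i\<in>I - {i0}. \<alpha> i * w i c)" for c
      proof -
        have "(\<Sum>i\<in>I. \<beta> i * v i c) = \<beta> i0 * v i0 c + (\<Sum>i\<in>I - {i0}. \<beta> i * v i c)"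
          using Suc.prems(1) i0(1) by (simp add: sum.remove)
        also have "(\<Sum>i\<in>I - {i0}. \<beta> i * v i c) = (\<Sum>i\<in>I - {i0}. \<alpha> i * v i c)"
          by (rule sum.cong) (auto simp: \<beta>_def)
        finally have k1: "(\<Sum>i\<in>I. \<beta> i * v i c) = \<beta> i0 * v i0 c + (\<Sum>i\<in>I - {i0}. \<alpha> i * v i c)" .
        have k2: "(\<Sum>i\<in>I - {i0}. \<alpha> i * w i c) = (\<Sum>i\<in>I - {i0}. \<alpha> i * v i c) - (\<Sum>i\<in>I - {i0}. \<alpha> i * v i n) / v i0 n * v i0 c"
        proof -
          have "(\<Sum>i\<in>I - {i0}. \<alpha> i * w i c) = (\<Sum>i\<in>I - {i0}. \<alpha> i * v i c - (\<alpha> i * v i n) / v i0 n * v i0 c)"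
            unfolding w_def by (rule sum.cong) (simp_all add: right_diff_distrib)
          also have "\<dots> = (\<Sum>i\<in>I - {i0}. \<alpha> i * v i c) - (\<Sum>i\<in>I - {i0}. (\<alpha> i * v i n) / v i0 n * v i0 c)"
            by (rule sum_subtractf)
          also have "(\<Sum>i\<in>I - {i0}. (\<alpha> i * v i n) / v i0 n * v i0 c) = (\<Sum>i\<in>I - {i0}. \<alpha> i * v i n) / v i0 n * v i0 c"
            by (simp add: sum_distrib_right sum_divide_distrib)
          finally show ?thesis .
        qed
        show ?thesis unfolding k1 k2 by (simp add: \<beta>_def s_def algebra_simps)
      qed
      have "\<forall>c<Suc n. (\<Sum>i\<in>I. \<beta> i * v i c) = 0"
      proof (intro allI impI)
        fix c assume "c < Suc n"
        then consider "c < n" | "c = n" by linarith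
        then show "(\<Sum>i\<in>I. \<beta> i * v i c) = 0"
        proof cases
          case 1 then show ?thesis using h key by simp
        next
          case 2
          have "(\<Sum>i\<in>I - {i0}. \<alpha> i * w i n) = 0"
            unfolding w_def using i0(2) by (intro sum.neutral) simp
          then show ?thesis using key 2 by simp
        qed
      qed
      then have "\<forall>i\<in>I. \<beta> i = 0" using Suc.prems(2) unfolding indepf_def by blast
      then show "\<forall>i\<in>I - {i0}. \<alpha> i = 0" unfolding \<beta>_def by (metis DiffE singletonI)
    qed
    then have "card (I - {i0}) \<le> n" using Suc.IH Suc.prems(1) by blast
    then show ?thesis using i0(1) Suc.prems(1)
      by (metis card_Diff_singleton_if card_Suc_Diff1 not_less_eq_eq)
  qed
qed



lemma indepf_single:
  assumes "c0 < n" "u c0 \<noteq> (0::'a::field)"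
  shows "indepf n {0} (\<lambda>_. u)"
proof (unfold indepf_def, intro allI impI)
  fix \<alpha> :: "nat \<Rightarrow> 'a" assume "\<forall>c<n. (\<Sum>i\<in>{0}. \<alpha> i * u c) = 0"
  then have "\<alpha> 0 * u c0 = 0" using assms(1) by simp
  then show "\<forall>i\<in>{0}. \<alpha> i = 0" using assms(2) by simp
qed

lemma greedy:
  fixes E :: "'e \<Rightarrow> nat \<Rightarrow> 'a::field" and Q :: "'e \<Rightarrow> bool"
  assumes span: "\<And>u. (\<exists>c<n. u c \<noteq> 0) \<Longrightarrow> \<exists>e. Q e \<and> (\<Sum>c<n. E e c * u c) \<noteq> 0"
  shows "(\<And>I v. finite I \<Longrightarrow> (\<forall>i\<in>I. Z (v i)) \<Longrightarrow> indepf n I v \<Longrightarrow> card I \<le> m) \<Longrightarrow>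
    \<exists>S. length S \<le> m \<and> set S \<subseteq> Collect Q \<and>
       (\<forall>u. Z u \<and> (\<forall>e\<in>set S. (\<Sum>c<n. E e c * u c) = 0) \<longrightarrow> (\<forall>c<n. u c = 0))"
proof (induction m arbitrary: Z)
  case 0
  have "\<forall>u. Z u \<longrightarrow> (\<forall>c<n. u c = 0)"
  proof (intro allI impI)
    fix u c assume "Z u" "c < n"
    show "u c = 0"
    proof (rule ccontr)
      assume "u c \<noteq> 0"
      then have "indepf n {0} (\<lambda>_. u)" using indepf_single \<open>c < n\<close> by blast
      then have "card {0::nat} \<le> 0" using 0[of "{0}" "\<lambda>_. u"] \<open>Z u\<close> by simp
      then show False by simp
    qed
  qed
  then show ?case by (intro exI[of _ "[]"]) auto
next
  case (Suc m)
  show ?case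
  proof (cases "\<exists>u. Z u \<and> (\<exists>c<n. u c \<noteq> 0)")
    case False
    then show ?thesis by (intro exI[of _ "[]"]) auto
  next
    case True
    then obtain u where u: "Z u" "\<exists>c<n. u c \<noteq> 0" by blast
    obtain e where e: "Q e" "(\<Sum>c<n. E e c * u c) \<noteq> 0" using span u(2) by blast
    define Z' where "Z' w = (Z w \<and> (\<Sum>c<n. E e c * w c) = 0)" for w
    have bound: "card I \<le> m" if I: "finite I" "\<forall>i\<in>I. Z' (v i)" "indepf n I v" for I v
    proof -
      obtain k :: nat where k: "k \<notin> I" using I(1) ex_new_if_finite infinite_UNIV_nat by blast
      define v' where "v' = v(k := u)"
      have "indepf n (insert k I) v'" unfolding indepf_def
      proof (intro allI impI)
        fix \<beta> :: "nat \<Rightarrow> 'a" assume h: "\<forall>c<n. (\<Sum>i\<in>insert k I. \<beta> i * v' i c) = 0"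
        have split: "(\<Sum>i\<in>insert k I. \<beta> i * v' i c) = \<beta> k * u c + (\<Sum>i\<in>I. \<beta> i * v i c)" for c
        proof -
          have "(\<Sum>i\<in>I. \<beta> i * v' i c) = (\<Sum>i\<in>I. \<beta> i * v i c)"
            by (rule sum.cong) (use k in \<open>auto simp: v'_def\<close>)
          then show ?thesis using k I(1) by (simp add: v'_def)
        qed
        have "0 = (\<Sum>c<n. E e c * (\<Sum>i\<in>insert k I. \<beta> i * v' i c))"
          using h by simp
        also have "\<dots> = (\<Sum>c<n. \<beta> k * (E e c * u c) + (\<Sum>i\<in>I. \<beta> i * (E e c * v i c)))"
          unfolding split by (rule sum.cong) (simp_all add: algebra_simps sum_distrib_left)
        also have "\<dots> = (\<Sum>c<n. \<beta> k * (E e c * u c)) + (\<Sum>c<n. \<Sum>i\<in>I. \<beta> i * (E e c * v i c))"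
          by (rule sum.distrib)
        also have "(\<Sum>c<n. \<Sum>i\<in>I. \<beta> i * (E e c * v i c)) = (\<Sum>i\<in>I. \<beta> i * (\<Sum>c<n. E e c * v i c))"
          unfolding sum_distrib_left by (rule sum.swap)
        also have "(\<Sum>c<n. \<beta> k * (E e c * u c)) = \<beta> k * (\<Sum>c<n. E e c * u c)"
          by (simp add: sum_distrib_left)
        also have "(\<Sum>i\<in>I. \<beta> i * (\<Sum>c<n. E e c * v i c)) = 0"
          using I(2) by (simp add: Z'_def)
        finally have "\<beta> k = 0" using e(2) by simp
        then have "\<forall>c<n. (\<Sum>i\<in>I. \<beta> i * v i c) = 0" using h split by simp
        then have "\<forall>i\<in>I. \<beta> i = 0" using I(3) unfolding indepf_def by blast
        then show "\<forall>i\<in>insert k I. \<beta> i = 0" using \<open>\<beta> k = 0\<close> by simp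
      qed
      moreover have "\<forall>i\<in>insert k I. Z (v' i)" using I(2) u(1) by (auto simp: v'_def Z'_def)
      ultimately have "card (insert k I) \<le> Suc m" using Suc.prems[of "insert k I" v'] I(1) by simp
      then show ?thesis using k I(1) by simp
    qed
    have "\<exists>S. length S \<le> m \<and> set S \<subseteq> Collect Q \<and>
      (\<forall>w. Z' w \<and> (\<forall>e\<in>set S. (\<Sum>c<n. E e c * w c) = 0) \<longrightarrow> (\<forall>c<n. w c = 0))"
      apply (rule Suc.IH)
      apply (rule bound)
        apply assumption+
      done
    then obtain S where S: "length S \<le> m" "set S \<subseteq> Collect Q"
      "\<forall>w. Z' w \<and> (\<forall>e\<in>set S. (\<Sum>c<n. E e c * w c) = 0) \<longrightarrow> (\<forall>c<n. w c = 0)"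
      by (elim exE conjE)
    show ?thesis
    proof (rule exI[of _ "e # S"], intro conjI allI impI)
      show "length (e # S) \<le> Suc m" using S(1) by simp
      show "set (e # S) \<subseteq> Collect Q" using S(2) e(1) by simp
      fix w c assume w: "Z w \<and> (\<forall>e'\<in>set (e # S). (\<Sum>c<n. E e' c * w c) = 0)" and c: "c < n"
      have "Z' w" using w unfolding Z'_def by simp
      moreover have "\<forall>e'\<in>set S. (\<Sum>c<n. E e' c * w c) = 0" using w by simp
      ultimately show "w c = 0" using S(3) c by blast
    qed
  qed
qed


lemma D_sum:
  fixes D :: "'a::ab_group_add \<Rightarrow> 'a"
  assumes D_add: "\<And>a b. D (a + b) = D a + D b"
  shows "D (\<Sum>k\<in>A. f k) = (\<Sum>k\<in>A. D (f k))"
proof -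
  have "D 0 + D 0 = D 0 + 0" using D_add[of 0 0] by simp
  then have D0: "D 0 = 0" by (rule add_left_imp_eq)
  show ?thesis
    by (induction A rule: infinite_finite_induct) (simp_all add: D0 D_add)
qed
lemma wronski:
  fixes emb :: "'c::field \<Rightarrow> 'a::field" and D :: "'a \<Rightarrow> 'a"
  assumes emb_add: "\<And>a b. emb (a + b) = emb a + emb b"
    and emb_one: "emb 1 = 1"
    and D_add: "\<And>a b. D (a + b) = D a + D b"
    and D_mult: "\<And>a b. D (a * b) = a * D b + D a * b"
    and constants: "{a. D a = 0} = range emb"
  shows "(\<forall>i<n. (\<Sum>k<n. a k * (D^^i) (b k)) = 0) \<Longrightarrow> (\<exists>k<n. a k \<noteq> 0) \<Longrightarrow>
     \<exists>c. (\<exists>k<n. c k \<noteq> 0) \<and> (\<Sum>k<n. emb (c k) * b k) = 0"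
proof (induction n arbitrary: a)
  case 0
  then show ?case by simp
next
  case (Suc n)
  have "emb 0 + emb 0 = emb 0 + 0" using emb_add[of 0 0] by simp
  then have emb0: "emb 0 = 0" by (rule add_left_imp_eq)
  have "D 1 + D 1 = D 1 + 0" using D_mult[of 1 1] by simp
  then have D1: "D 1 = 0" by (rule add_left_imp_eq)
  have "D 0 + D 0 = D 0 + 0" using D_add[of 0 0] by simp
  then have D0: "D 0 = 0" by (rule add_left_imp_eq)
  show ?case
  proof (cases "\<exists>a'. (\<forall>i<n. (\<Sum>k<n. a' k * (D^^i) (b k)) = 0) \<and> (\<exists>k<n. a' k \<noteq> 0)")
    case True
    then obtain a' where "(\<forall>i<n. (\<Sum>k<n. a' k * (D^^i) (b k)) = 0)" "(\<exists>k<n. a' k \<noteq> 0)" by blast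
    from Suc.IH[OF this] obtain c where c: "\<exists>k<n. c k \<noteq> 0" "(\<Sum>k<n. emb (c k) * b k) = 0" by blast
    obtain k0 where k0: "k0 < n" "c k0 \<noteq> 0" using c(1) by blast
    have s1: "(\<Sum>k<Suc n. emb ((c(n := 0)) k) * b k) = (\<Sum>k<n. emb (c k) * b k)"
      using emb0 by simp
    show ?thesis
    proof (rule exI[of _ "c(n := 0)"], rule conjI)
      show "\<exists>k<Suc n. (c(n := 0)) k \<noteq> 0"
        using k0 by (intro exI[of _ k0]) simp
      show "(\<Sum>k<Suc n. emb ((c(n := 0)) k) * b k) = 0" using s1 c(2) by simp
    qed
  next
    case False
    note nodep = False
    have an: "a n \<noteq> 0"
    proof
      assume an0: "a n = 0"
      have "\<forall>i<n. (\<Sum>k<n. a k * (D^^i) (b k)) = 0" using Suc.prems(1) an0 by simp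
      moreover have "\<exists>k<n. a k \<noteq> 0" using Suc.prems(2) an0 by (metis less_SucE)
      ultimately show False using nodep by blast
    qed
    define a' where "a' k = a k / a n" for k
    have a'n: "a' n = 1" using an by (simp add: a'_def)
    have rel: "(\<Sum>k<Suc n. a' k * (D^^i) (b k)) = 0" if "i < Suc n" for i
    proof -
      have "(\<Sum>k<Suc n. a' k * (D^^i) (b k)) = (\<Sum>k<Suc n. a k * (D^^i) (b k)) / a n"
        by (simp add: a'_def sum_divide_distrib del: sum.lessThan_Suc)
      then show ?thesis using Suc.prems(1) that by simp
    qed
    have "\<forall>i<n. (\<Sum>k<n. D (a' k) * (D^^i) (b k)) = 0"
    proof (intro allI impI)
      fix i assume i: "i < n"
      have "0 = D (\<Sum>k<Suc n. a' k * (D^^i) (b k))" using rel[of i] i D0 by simp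
      also have "\<dots> = (\<Sum>k<Suc n. a' k * (D^^Suc i) (b k)) + (\<Sum>k<Suc n. D (a' k) * (D^^i) (b k))"
        by (simp add: D_sum[OF D_add] D_mult sum.distrib del: sum.lessThan_Suc)
      also have "(\<Sum>k<Suc n. a' k * (D^^Suc i) (b k)) = 0" using rel[of "Suc i"] i by simp
      also have "(\<Sum>k<Suc n. D (a' k) * (D^^i) (b k)) = (\<Sum>k<n. D (a' k) * (D^^i) (b k))"
        using a'n D1 by simp
      finally show "(\<Sum>k<n. D (a' k) * (D^^i) (b k)) = 0" by simp
    qed
    moreover have nd: "\<And>a''. (\<forall>i<n. (\<Sum>k<n. a'' k * (D^^i) (b k)) = 0) \<Longrightarrow> \<not> (\<exists>k<n. a'' k \<noteq> 0)"
      using nodep by blast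
    ultimately have "\<forall>k<n. D (a' k) = 0" using nd[of "\<lambda>k. D (a' k)"] by simp
    then have Da': "\<forall>k<Suc n. D (a' k) = 0" using a'n D1 by (auto simp: less_Suc_eq)
    have "\<forall>k. \<exists>ck. k < Suc n \<longrightarrow> a' k = emb ck"
    proof
      fix k
      show "\<exists>ck. k < Suc n \<longrightarrow> a' k = emb ck"
      proof (cases "k < Suc n")
        case True
        then have "a' k \<in> {a. D a = 0}" using Da' by simp
        then have "a' k \<in> range emb" by (simp only: constants)
        then show ?thesis by auto
      qed simp
    qed
    from choice[OF this] obtain c where c0: "\<forall>k. k < Suc n \<longrightarrow> a' k = emb (c k)" by blast
    have "emb (c n) = 1" using c0 a'n by (metis lessI)
    then have cn: "c n \<noteq> 0" using emb0 by auto
    have "(\<Sum>k<Suc n. emb (c k) * b k) = (\<Sum>k<Suc n. a' k * (D^^0) (b k))"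
      by (rule sum.cong) (use c0 in simp_all)
    also have "\<dots> = 0" by (rule rel) simp
    finally have sc: "(\<Sum>k<Suc n. emb (c k) * b k) = 0" .
    show ?thesis
      by (rule exI[of _ c]) (use cn sc in auto)
  qed
qed



lemma sum_lessThan_add_nat:
  fixes a b :: nat and f :: "nat \<Rightarrow> 'a::comm_monoid_add"
  shows "(\<Sum>c<a+b. f c) = (\<Sum>c<a. f c) + (\<Sum>k<b. f (a+k))"
  by (induction b) (simp_all add: add.assoc)

lemma sum_mult_split:
  fixes rL rP :: nat and f :: "nat \<Rightarrow> 'a::comm_monoid_add"
  shows "(\<Sum>c<rL*rP. f c) = (\<Sum>j<rP. \<Sum>k<rL. f (rL*j + k))"
proof (induction rP)
  case (Suc rP)
  have e: "rL * Suc rP = rL*rP + rL" by simp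
  show ?case unfolding e sum_lessThan_add_nat Suc by simp
qed simp

lemma vandermonde:
  fixes g z :: "nat \<Rightarrow> 'a::field"
  assumes inj: "inj_on g {..<rP}" and j0: "j0 < rP" "z j0 \<noteq> 0"
  shows "\<exists>d<rP. (\<Sum>j<rP. g j ^ d * z j) \<noteq> 0"
proof (rule ccontr)
  assume "\<not> ?thesis"
  then have all0: "\<And>d. d < rP \<Longrightarrow> (\<Sum>j<rP. g j ^ d * z j) = 0" by auto
  define p where "p = (\<Prod>j\<in>{..<rP}-{j0}. [:- g j, 1:])"
  have "degree p \<le> (\<Sum>j\<in>{..<rP}-{j0}. degree [:- g j, 1:])"
    unfolding p_def using degree_prod_sum_le[of "{..<rP}-{j0}" "\<lambda>j. [:- g j, 1:]"] by (simp add: o_def)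
  also have "\<dots> = card ({..<rP}-{j0})" by simp
  also have "\<dots> = rP - 1" using j0 by simp
  finally have degp: "degree p < rP" using j0 by linarith
  have "(\<Sum>j<rP. poly p (g j) * z j) = (\<Sum>j<rP. \<Sum>d\<le>degree p. coeff p d * (g j ^ d * z j))"
    by (simp add: poly_altdef sum_distrib_right mult.assoc)
  also have "\<dots> = (\<Sum>d\<le>degree p. coeff p d * (\<Sum>j<rP. g j ^ d * z j))"
    by (simp add: sum.swap[of _ "{..<rP}"] sum_distrib_left)
  also have "\<dots> = 0" using all0 degp by simp
  finally have s0: "(\<Sum>j<rP. poly p (g j) * z j) = 0" .
  have pz: "poly p (g j) = 0" if "j < rP" "j \<noteq> j0" for j
    unfolding p_def poly_prod using that by (auto intro!: prod_zero)
  have "(\<Sum>j<rP. poly p (g j) * z j) = poly p (g j0) * z j0"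
    using j0 pz by (subst sum.remove[of _ j0]) (auto intro!: sum.neutral)
  moreover have "poly p (g j0) \<noteq> 0"
    unfolding p_def poly_prod using inj j0(1) by (auto simp: inj_on_def)
  ultimately have "poly p (g j0) * z j0 = 0" "poly p (g j0) \<noteq> 0" using s0 by simp_all
  then show False using j0(2) by simp
qed

lemma span_E:
  fixes g u :: "nat \<Rightarrow> 'a::field"
  assumes inj: "inj_on g {..<rP}" and c0: "c0 < rL*rP" "u c0 \<noteq> 0"
  shows "\<exists>k d. k < rL \<and> d < rP \<and> (\<Sum>c<rL*rP. (if c mod rL = k then g (c div rL) ^ d else 0) * u c) \<noteq> 0"
proof -
  have rL: "rL > 0" using c0 by (cases rL) auto
  define k where "k = c0 mod rL"
  define j0 where "j0 = c0 div rL"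
  have k: "k < rL" using rL by (simp add: k_def)
  have j0: "j0 < rP" using c0(1) by (simp add: j0_def less_mult_imp_div_less mult.commute)
  have c0e: "rL * j0 + k = c0" by (simp add: k_def j0_def)
  obtain d where d: "d < rP" "(\<Sum>j<rP. g j ^ d * u (rL*j + k)) \<noteq> 0"
    using vandermonde[OF inj j0, of "\<lambda>j. u (rL*j + k)"] c0e c0(2) by auto
  have "(\<Sum>c<rL*rP. (if c mod rL = k then g (c div rL) ^ d else 0) * u c)
      = (\<Sum>j<rP. \<Sum>k'<rL. (if k' = k then g j ^ d * u (rL*j + k) else 0))"
    unfolding sum_mult_split
  proof (rule sum.cong[OF refl], rule sum.cong[OF refl])
    fix j k' assume "k' \<in> {..<rL}"
    then have "(rL*j + k') mod rL = k'" "(rL*j + k') div rL = j" by auto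
    then show "(if (rL * j + k') mod rL = k then g ((rL * j + k') div rL) ^ d else 0) * u (rL * j + k')
        = (if k' = k then g j ^ d * u (rL * j + k) else 0)" by auto
  qed
  also have "\<dots> = (\<Sum>j<rP. g j ^ d * u (rL*j + k))" using k by simp
  finally have "(\<Sum>c<rL*rP. (if c mod rL = k then g (c div rL) ^ d else 0) * u c) \<noteq> 0"
    using d(2) by simp
  then show ?thesis using d(1) k by (intro exI[of _ k] exI[of _ d]) simp
qed



theorem lemma6:
  fixes emb :: "'c::field_char_0 \<Rightarrow> 'a::field"
    and D :: "'a \<Rightarrow> 'a"
    and xx :: 'a
    and comp :: "'a \<Rightarrow> 'a \<Rightarrow> 'a"
    and l :: "nat \<Rightarrow> 'c poly" and rL :: nat
    and P :: "'c poly poly" and rP :: nat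
    and f g :: "nat \<Rightarrow> 'a"
    and V :: "'a set" and r :: nat
    and A :: "nat \<Rightarrow> nat \<Rightarrow> 'c poly poly"
  assumes emb_add: "\<And>a b. emb (a + b) = emb a + emb b"
    and emb_mult: "\<And>a b. emb (a * b) = emb a * emb b"
    and emb_one: "emb 1 = 1"
    and D_add: "\<And>a b. D (a + b) = D a + D b"
    and D_mult: "\<And>a b. D (a * b) = a * D b + D a * b"
    and constants: "{a. D a = 0} = range emb"
    and D_x: "D xx = 1"
    and chain_rule: "\<And>u v. D (comp u v) = comp (D u) v * D v"
    and L_order: "l rL \<noteq> 0"
    and P_deg: "degree P = rP"
    and P_sqfree: "squarefree (map_poly (\<lambda>q. Fract q 1) P)"
    and P_no_const_div: "\<And>q :: 'c alg_closure poly.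
           map_poly (\<lambda>a. [:a:]) q dvd map_poly (map_poly to_ac) P \<Longrightarrow> degree q = 0"
    and f_sol: "\<And>i. i < rL \<Longrightarrow> (\<Sum>k\<le>rL. eval_x emb xx (l k) * (D ^^ k) (f i)) = 0"
    and f_indep: "c_lin_indep emb f rL"
    and g_sol: "\<And>j. j < rP \<Longrightarrow> eval_xy emb xx P (g j) = 0"
    and g_distinct: "inj_on g {..<rP}"
    and V_def: "V = {(\<Sum>i<rL. \<Sum>j<rP. emb (c i j) * comp (f i) (g j)) | c :: nat \<Rightarrow> nat \<Rightarrow> 'c. True}"
    and r_dim: "\<exists>b. c_lin_indep emb b r \<and> c_span emb b r = V"
    and A_prop: "\<And>h. h \<in> V \<longleftrightarrow>
           vec (r + 1) (\<lambda>i. (D ^^ i) h) \<in>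
             {mat (r + 1) (rL * rP) (\<lambda>(i, c). eval_xy emb xx (A i (c mod rL)) (g (c div rL))) *\<^sub>v w
               | w. w \<in> carrier_vec (rL * rP)}"
  shows "\<exists>B :: nat \<Rightarrow> nat \<Rightarrow> 'c poly.
           (\<forall>i < rL * rP - r. \<forall>k < rL. degree (B i k) \<le> rP - 1) \<and>
           vec_space.rank (rL * rP + 1)
             (mat (rL * rP + 1) (rL * rP) (\<lambda>(i, c).
                if i \<le> r then eval_xy emb xx (A i (c mod rL)) (g (c div rL))
                else eval_y emb (B (i - (r + 1)) (c mod rL)) (g (c div rL)))) = rL * rP"
proof -
  define N where "N = rL * rP"
  have "emb 0 + emb 0 = emb 0 + 0" using emb_add[of 0 0] by simp
  then have emb0: "emb 0 = 0" by (rule add_left_imp_eq)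
  define a where "a i c = eval_xy emb xx (A i (c mod rL)) (g (c div rL))" for i c
  define A2 where "A2 = mat (r + 1) (rL * rP) (\<lambda>(i, c). eval_xy emb xx (A i (c mod rL)) (g (c div rL)))"
  define E where "E kd c = (if c mod rL = fst kd then g (c div rL) ^ snd kd else 0)" for kd :: "nat \<times> nat" and c
  obtain b where b: "c_lin_indep emb b r" "c_span emb b r = V" using r_dim by blast
  have bV: "b k \<in> V" if "k < r" for k
  proof -
    have eq: "(\<Sum>i<r. emb (if i = k then 1 else 0) * b i) = b k"
    proof -
      have "(\<Sum>i<r. emb (if i = k then 1 else 0) * b i) = (\<Sum>i<r. if i = k then b i else 0)"
        by (rule sum.cong) (simp_all add: emb0 emb_one)
      then show ?thesis using that by simp
    qed
    show ?thesis unfolding b(2)[symmetric] c_span_def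
      by (intro CollectI exI[of _ "\<lambda>i. if i = k then 1 else 0"]) (simp add: eq)
  qed
  have "\<forall>k. \<exists>w. k < r \<longrightarrow> w \<in> carrier_vec N \<and> vec (r + 1) (\<lambda>i. (D ^^ i) (b k)) = A2 *\<^sub>v w"
  proof
    fix k
    show "\<exists>w. k < r \<longrightarrow> w \<in> carrier_vec N \<and> vec (r + 1) (\<lambda>i. (D ^^ i) (b k)) = A2 *\<^sub>v w"
    proof (cases "k < r")
      case True
      then have "vec (r + 1) (\<lambda>i. (D ^^ i) (b k)) \<in> {A2 *\<^sub>v w | w. w \<in> carrier_vec N}"
        using bV A_prop unfolding A2_def N_def by simp
      then obtain w where "w \<in> carrier_vec N" "vec (r + 1) (\<lambda>i. (D ^^ i) (b k)) = A2 *\<^sub>v w"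
        by blast
      then show ?thesis by blast
    qed simp
  qed
  from choice[OF this] obtain x where x0: "\<forall>k. k < r \<longrightarrow> x k \<in> carrier_vec N \<and> vec (r + 1) (\<lambda>i. (D ^^ i) (b k)) = A2 *\<^sub>v x k"
    by blast
  have x: "\<And>k. k < r \<Longrightarrow> x k \<in> carrier_vec N"
    "\<And>k. k < r \<Longrightarrow> vec (r + 1) (\<lambda>i. (D ^^ i) (b k)) = A2 *\<^sub>v x k" using x0 by simp_all
  have xa: "(D ^^ i) (b k) = (\<Sum>c<N. a i c * x k $ c)" if "k < r" "i \<le> r" for k i
  proof -
    have "(D ^^ i) (b k) = vec (r + 1) (\<lambda>i. (D ^^ i) (b k)) $ i" using that by simp
    also have "\<dots> = (A2 *\<^sub>v x k) $ i" using x(2) that by simp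
    also have "\<dots> = (\<Sum>c<N. a i c * x k $ c)"
      using that x(1)[OF that(1)]
      by (simp add: A2_def N_def a_def scalar_prod_def atLeast0LessThan)
    finally show ?thesis .
  qed
  define Z where "Z u = (\<forall>i\<le>r. (\<Sum>c<N. a i c * u c) = 0)" for u
  have bound: "r + card I \<le> N" if I: "finite I" "\<forall>i\<in>I. Z (v i)" "indepf N I v" for I v
  proof -
    define J where "J = {..<r} \<union> (\<lambda>i. r + i) ` I"
    define V' where "V' j = (if j < r then (\<lambda>c. x j $ c) else v (j - r))" for j
    have disj: "{..<r} \<inter> (\<lambda>i. r + i) ` I = {}" by auto
    have injr: "inj_on (\<lambda>i. r + i) I" by (simp add: inj_on_def)
    have splitJ: "(\<Sum>j\<in>J. h j) = (\<Sum>j<r. h j) + (\<Sum>i\<in>I. h (r + i))" for h :: "nat \<Rightarrow> 'a"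
      unfolding J_def using I(1) disj by (simp add: sum.union_disjoint sum.reindex[OF injr])
    have "indepf N J V'" unfolding indepf_def
    proof (intro allI impI)
      fix \<gamma> :: "nat \<Rightarrow> 'a" assume h: "\<forall>c<N. (\<Sum>j\<in>J. \<gamma> j * V' j c) = 0"
      have h2: "(\<Sum>j<r. \<gamma> j * x j $ c) + (\<Sum>i\<in>I. \<gamma> (r + i) * v i c) = 0" if "c < N" for c
        using h that unfolding splitJ by (simp add: V'_def)
      have W: "(\<Sum>k<r. \<gamma> k * (D ^^ i) (b k)) = 0" if "i < r" for i
      proof -
        have "0 = (\<Sum>c<N. a i c * ((\<Sum>j<r. \<gamma> j * x j $ c) + (\<Sum>i'\<in>I. \<gamma> (r + i') * v i' c)))"
          using h2 by simp
        also have "\<dots> = (\<Sum>c<N. \<Sum>j<r. \<gamma> j * (a i c * x j $ c)) + (\<Sum>c<N. \<Sum>i'\<in>I. \<gamma> (r + i') * (a i c * v i' c))"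
          by (simp add: distrib_left sum.distrib sum_distrib_left mult.left_commute)
        also have "(\<Sum>c<N. \<Sum>j<r. \<gamma> j * (a i c * x j $ c)) = (\<Sum>j<r. \<gamma> j * (\<Sum>c<N. a i c * x j $ c))"
          unfolding sum_distrib_left by (rule sum.swap)
        also have "(\<Sum>c<N. \<Sum>i'\<in>I. \<gamma> (r + i') * (a i c * v i' c)) = (\<Sum>i'\<in>I. \<gamma> (r + i') * (\<Sum>c<N. a i c * v i' c))"
          unfolding sum_distrib_left by (rule sum.swap)
        also have "(\<Sum>i'\<in>I. \<gamma> (r + i') * (\<Sum>c<N. a i c * v i' c)) = 0"
          using I(2) that by (simp add: Z_def)
        also have "(\<Sum>j<r. \<gamma> j * (\<Sum>c<N. a i c * x j $ c)) = (\<Sum>k<r. \<gamma> k * (D ^^ i) (b k))"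
          using xa that by simp
        finally show ?thesis by simp
      qed
      have g0: "\<forall>k<r. \<gamma> k = 0"
      proof (rule ccontr)
        assume "\<not> (\<forall>k<r. \<gamma> k = 0)"
        then have ex: "\<exists>k<r. \<gamma> k \<noteq> 0" by simp
        have W': "\<forall>i<r. (\<Sum>k<r. \<gamma> k * (D ^^ i) (b k)) = 0" using W by simp
        from wronski[OF emb_add emb_one D_add D_mult constants, of r \<gamma> b, OF W' ex]
        obtain cc where cc: "(\<exists>k<r. cc k \<noteq> 0) \<and> (\<Sum>k<r. emb (cc k) * b k) = 0" by (rule exE)
        have "\<forall>k<r. cc k = 0" using spec[OF b(1)[unfolded c_lin_indep_def], of cc] conjunct2[OF cc] by simp
        then show False using conjunct1[OF cc] by blast
      qed
      then have "\<forall>c<N. (\<Sum>i\<in>I. \<gamma> (r + i) * v i c) = 0" using h2 by simp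
      then have "\<forall>i\<in>I. \<gamma> (r + i) = 0" using spec[OF I(3)[unfolded indepf_def], of "\<lambda>i. \<gamma> (r + i)"] by simp
      then show "\<forall>j\<in>J. \<gamma> j = 0" using g0 unfolding J_def by auto
    qed
    moreover have "finite J" using I(1) unfolding J_def by simp
    ultimately have "card J \<le> N" using indepf_card by blast
    moreover have "card J = r + card I"
      unfolding J_def using I(1) disj by (simp add: card_Un_disjoint card_image[OF injr])
    ultimately show ?thesis by simp
  qed
  have rN: "r \<le> N" using bound[of "{}" undefined] unfolding indepf_def by simp
  obtain S where S: "length S \<le> N - r" "set S \<subseteq> {kd. fst kd < rL \<and> snd kd < rP}"
    "\<forall>u. Z u \<and> (\<forall>e\<in>set S. (\<Sum>c<N. E e c * u c) = 0) \<longrightarrow> (\<forall>c<N. u c = 0)"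
  proof -
    have span: "\<exists>e. (fst e < rL \<and> snd e < rP) \<and> (\<Sum>c<N. E e c * u c) \<noteq> 0" if "\<exists>c<N. u c \<noteq> 0" for u
    proof -
      from that obtain c0 where "c0 < rL * rP" "u c0 \<noteq> 0" unfolding N_def by blast
      from span_E[of g rP c0 rL u, OF g_distinct this] obtain k d where
        "k < rL" "d < rP" "(\<Sum>c<rL*rP. (if c mod rL = k then g (c div rL) ^ d else 0) * u c) \<noteq> 0" by blast
      then show ?thesis by (intro exI[of _ "(k, d)"]) (simp add: E_def N_def cong: if_cong)
    qed
    have "\<exists>S. length S \<le> N - r \<and> set S \<subseteq> Collect (\<lambda>e. fst e < rL \<and> snd e < rP) \<and>
       (\<forall>u. Z u \<and> (\<forall>e\<in>set S. (\<Sum>c<N. E e c * u c) = 0) \<longrightarrow> (\<forall>c<N. u c = 0))"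
      apply (rule greedy[of N "\<lambda>e. fst e < rL \<and> snd e < rP" E Z "N - r"])
       apply (rule span, assumption)
      subgoal for I v using bound[of I v] by simp
      done
    then show ?thesis using that by (elim exE conjE) simp
  qed
  define B :: "nat \<Rightarrow> nat \<Rightarrow> 'c poly" where "B t k' = (if t < length S \<and> fst (S ! t) = k' then monom 1 (snd (S ! t)) else 0)" for t k'
  have degB: "\<forall>i < rL * rP - r. \<forall>k < rL. degree (B i k) \<le> rP - 1"
  proof (intro allI impI)
    fix i k assume "i < rL * rP - r" "k < rL"
    show "degree (B i k) \<le> rP - 1"
    proof (cases "i < length S \<and> fst (S ! i) = k")
      case True
      then have "S ! i \<in> set S" by simp
      then have "snd (S ! i) < rP" using S(2) by auto
      moreover have "B i k = monom 1 (snd (S ! i))" using True by (simp add: B_def)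
      then have "degree (B i k) \<le> snd (S ! i)" using Polynomial.degree_monom_le[of "1::'c" "snd (S ! i)"] by simp
      ultimately show ?thesis by linarith
    next
      case False
      then have "B i k = 0" unfolding B_def by (simp only: if_False)
      then show ?thesis by simp
    qed
  qed
  have evalB: "eval_y emb (B t k') y = (if t < length S \<and> fst (S ! t) = k' then y ^ snd (S ! t) else 0)" for t k' y
    by (simp add: B_def eval_y_def map_poly_monom emb0 emb_one poly_monom)
  define Mf where "Mf i c = (if i \<le> r then eval_xy emb xx (A i (c mod rL)) (g (c div rL))
                else eval_y emb (B (i - (r + 1)) (c mod rL)) (g (c div rL)))" for i c
  have ker: "\<forall>c<N. w c = 0" if h: "\<forall>i<N+1. (\<Sum>c<N. Mf i c * w c) = 0" for w
  proof -
    have "Z w" unfolding Z_def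
    proof (intro allI impI)
      fix i assume "i \<le> r"
      then have "(\<Sum>c<N. Mf i c * w c) = 0" using h rN by simp
      then show "(\<Sum>c<N. a i c * w c) = 0" using \<open>i \<le> r\<close> by (simp add: Mf_def a_def)
    qed
    moreover have "(\<Sum>c<N. E e c * w c) = 0" if "e \<in> set S" for e
    proof -
      obtain t where t: "t < length S" "S ! t = e" using \<open>e \<in> set S\<close> by (metis in_set_conv_nth)
      have "r + 1 + t < N + 1" using t S(1) rN by linarith
      then have "(\<Sum>c<N. Mf (r + 1 + t) c * w c) = 0" using h by simp
      moreover have "Mf (r + 1 + t) c = E e c" for c
        using t by (simp add: Mf_def evalB E_def)
      ultimately show ?thesis by simp
    qed
    ultimately show ?thesis using spec[OF S(3), of w] by simp
  qed
  define M where "M = mat (N + 1) N (\<lambda>(i, c). Mf i c)"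
  have Mcar: "M \<in> carrier_mat (N + 1) N" by (simp add: M_def)
  have Mv: "(M *\<^sub>v w) $ i = (\<Sum>c<N. Mf i c * w $ c)" if "i < N + 1" "w \<in> carrier_vec N" for i w
    using that by (simp add: M_def scalar_prod_def atLeast0LessThan)
  have kerM: "w = 0\<^sub>v N" if "w \<in> carrier_vec N" "M *\<^sub>v w = 0\<^sub>v (N + 1)" for w
  proof -
    have "\<forall>i<N+1. (\<Sum>c<N. Mf i c * w $ c) = 0"
    proof (intro allI impI)
      fix i assume i: "i < N + 1"
      have "(M *\<^sub>v w) $ i = 0" using that(2) i by simp
      then show "(\<Sum>c<N. Mf i c * w $ c) = 0" using Mv[OF i that(1)] by simp
    qed
    then have "\<forall>c<N. w $ c = 0" using ker[of "\<lambda>c. w $ c"] by simp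
    then show ?thesis using that(1) by (intro eq_vecI) auto
  qed
  interpret vs: vec_space "TYPE('a)" "N + 1" .
  have dist: "distinct (cols M)"
  proof -
    have "inj_on (col M) {0..<N}"
    proof (rule inj_onI, rule ccontr)
      fix i j assume ij: "i \<in> {0..<N}" "j \<in> {0..<N}" "col M i = col M j" "i \<noteq> j"
      define w where "w c = (if c = i then 1 else if c = j then -1 else (0::'a))" for c
      have "\<forall>k<N+1. (\<Sum>c<N. Mf k c * w c) = 0"
      proof (intro allI impI)
        fix k assume k: "k < N + 1"
        have "Mf k i = Mf k j"
        proof -
          have "col M i $ k = col M j $ k" using ij by simp
          then show ?thesis using k ij(1,2) by (simp add: M_def)
        qed
        have "(\<Sum>c<N. Mf k c * w c) = (\<Sum>c<N. (if c = i then Mf k c else 0) - (if c = j then Mf k c else 0))"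
          by (rule sum.cong) (use ij in \<open>auto simp: w_def\<close>)
        also have "\<dots> = Mf k i - Mf k j" using ij by (simp add: sum_subtractf)
        finally show "(\<Sum>c<N. Mf k c * w c) = 0" using \<open>Mf k i = Mf k j\<close> by simp
      qed
      then have "\<forall>c<N. w c = 0" by (rule ker)
      then have "w i = 0" using ij(1) by simp
      then show False by (simp add: w_def)
    qed
    then show ?thesis using Mcar by (simp add: cols_def distinct_map)
  qed
  have li: "vs.lin_indpt (set (cols M))"
  proof (rule ccontr)
    assume "\<not> vs.lin_indpt (set (cols M))"
    then obtain v where "v \<in> carrier_vec N" "v \<noteq> 0\<^sub>v N" "M *\<^sub>v v = 0\<^sub>v (N + 1)"
      using vs.lin_depE[OF Mcar _ dist] by blast
    then show False using kerM[of v] by simp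
  qed
  have rk: "vs.rank M = N" using vs.lin_indpt_full_rank[OF Mcar dist li] .
  have Meq: "M = mat (rL * rP + 1) (rL * rP) (\<lambda>(i, c).
                if i \<le> r then eval_xy emb xx (A i (c mod rL)) (g (c div rL))
                else eval_y emb (B (i - (r + 1)) (c mod rL)) (g (c div rL)))"
    unfolding M_def Mf_def N_def by simp
  have R: "vec_space.rank (rL * rP + 1) (mat (rL * rP + 1) (rL * rP) (\<lambda>(i, c).
                if i \<le> r then eval_xy emb xx (A i (c mod rL)) (g (c div rL))
                else eval_y emb (B (i - (r + 1)) (c mod rL)) (g (c div rL)))) = rL * rP"
    using rk unfolding Meq N_def .
  show ?thesis using degB R by blast
qed


end
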